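(* Let $d \equiv 2 \pmod 4$ be a square-free positive integer such that both equations $x^2 - dy^2 = -1$ and $x^2 - dy^2 = 6$ have solutions in integers $x, y$. Let $n = 4m + 4k\sqrt{d}$ with $m, k \in \mathbb{Z}$, and suppose it is not the case that both $m \equiv 5 \pmod 6$ and $k \equiv 3 \pmod 6$. Then there exist infinitely many $D(n)$-quadruples in $\mathbb{Z}[\sqrt{d}]$.
   Context: For $n \in \mathbb{Z}[\sqrt{d}]$, a set $\{a_1,a_2,a_3,a_4\}$ of four distinct non-zero elements of $\mathbb{Z}[\sqrt{d}]$ is called a $D(n)$-quadruple in $\mathbb{Z}[\sqrt{d}]$ if $a_ia_j + n$ is a square of an element of $\mathbb{Z}[\sqrt{d}]$ for all $1 \le i < j \le 4$. *)

theory Defs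
  imports Main "HOL-Computational_Algebra.Squarefree"
begin

text \<open>Elements of Z[sqrt d] are represented as pairs (a, b) meaning a + b*sqrt d.
  For non-square d this representation is unique.\<close>

type_synonym zsqrt = "int \<times> int"

definition zs_add :: "zsqrt \<Rightarrow> zsqrt \<Rightarrow> zsqrt" where
  "zs_add x y = (fst x + fst y, snd x + snd y)"

definition zs_mult :: "int \<Rightarrow> zsqrt \<Rightarrow> zsqrt \<Rightarrow> zsqrt" where
  "zs_mult d x y = (fst x * fst y + d * snd x * snd y, fst x * snd y + snd x * fst y)"

definition zs_is_square :: "int \<Rightarrow> zsqrt \<Rightarrow> bool" where
  "zs_is_square d w \<longleftrightarrow> (\<exists>z. zs_mult d z z = w)"

definition D_quadruple :: "int \<Rightarrow> zsqrt \<Rightarrow> zsqrt set \<Rightarrow> bool" where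
  "D_quadruple d n S \<longleftrightarrow>
     card S = 4 \<and> (0, 0) \<notin> S \<and>
     (\<forall>a\<in>S. \<forall>b\<in>S. a \<noteq> b \<longrightarrow> zs_is_square d (zs_add (zs_mult d a b) n))"

end

theory Submission imports Defs "HOL-Computational_Algebra.Polynomial"
begin


definition phi :: "int \<Rightarrow> zsqrt \<Rightarrow> real" where
  "phi d x = real_of_int (fst x) + real_of_int (snd x) * sqrt (real_of_int d)"

lemma phi_add: "phi d (zs_add x y) = phi d x + phi d y"
  by (simp add: phi_def zs_add_def algebra_simps)

lemma phi_mult: assumes "d \<ge> 0" shows "phi d (zs_mult d x y) = phi d x * phi d y"
proof -
  have s: "sqrt (real_of_int d) * sqrt (real_of_int d) = real_of_int d" using assms by simp
  have "phi d x * phi d y = real_of_int (fst x) * real_of_int (fst y)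
     + (sqrt (real_of_int d) * sqrt (real_of_int d)) * real_of_int (snd x) * real_of_int (snd y)
     + (real_of_int (fst x) * real_of_int (snd y) + real_of_int (snd x) * real_of_int (fst y)) * sqrt (real_of_int d)"
    unfolding phi_def by (simp add: algebra_simps)
  also have "\<dots> = phi d (zs_mult d x y)" unfolding s phi_def zs_mult_def by simp
  finally show ?thesis by simp
qed

lemma nosq_aux: "\<forall>A B::int. d mod 4 = 2 \<longrightarrow> nat \<bar>B\<bar> = N \<longrightarrow> A^2 = d * B^2 \<longrightarrow> B = 0"
proof (induction N rule: less_induct)
  case (less N)
  show ?case
  proof (intro allI impI)
    fix A B :: int assume d: "d mod 4 = 2" and N: "nat \<bar>B\<bar> = N" and e: "A^2 = d * B^2"
    show "B = 0"
    proof (rule ccontr)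
      assume B0: "B \<noteq> 0"
      define d' where "d' = d div 2"
      have dd: "d = 2 * d'" "odd d'" using d unfolding d'_def by presburger+
      have "even (A^2)" using e dd by simp
      then obtain A' where A': "A = 2 * A'" by auto
      have "4 * A'^2 = d * B^2" using e A' by (simp add: power_mult_distrib)
      hence e2: "2 * A'^2 = d' * B^2" using dd(1) by simp
      hence "even (d' * B^2)" by (metis dvd_triv_left)
      hence "even (B^2)" using dd(2) by simp
      then obtain B' where B': "B = 2 * B'" by auto
      have e3: "A'^2 = d * B'^2" using e2 B' dd(1) by (simp add: power_mult_distrib)
      have "nat \<bar>B'\<bar> < N" using N B' B0 by auto
      hence "B' = 0" using less d e3 by blast
      thus False using B' B0 by simp
    qed
  qed
qed

lemma nosq: "d mod 4 = 2 \<Longrightarrow> (A::int)^2 = d * B^2 \<Longrightarrow> B = 0"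
  using nosq_aux by blast

lemma phi_inj: assumes "d mod 4 = 2" "phi d x = phi d y" "d > 0" shows "x = y"
proof (cases "snd x = snd y")
  case True
  then show ?thesis using assms(2) by (simp add: phi_def prod_eq_iff)
next
  case False
  have d0: "d \<ge> 0" using assms(3) by simp
  have "real_of_int (fst y - fst x) = real_of_int (snd x - snd y) * sqrt d"
    using assms(2) by (simp add: phi_def algebra_simps)
  hence "(real_of_int (fst y - fst x))^2 = (real_of_int (snd x - snd y))^2 * d"
    using d0 by (simp add: power_mult_distrib)
  hence "real_of_int ((fst y - fst x)^2) = real_of_int (d * (snd x - snd y)^2)" by (simp add: algebra_simps)
  hence "(fst y - fst x)^2 = d * (snd x - snd y)^2" by (simp only: of_int_eq_iff)
  hence "snd x - snd y = 0" using nosq assms(1) by blast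
  thus ?thesis using False by simp
qed




definition lc :: "int \<Rightarrow> int \<Rightarrow> int \<Rightarrow> zsqrt \<Rightarrow> zsqrt \<Rightarrow> zsqrt \<Rightarrow> zsqrt" where
  "lc a b c x y z = (a * fst x + b * fst y + c * fst z, a * snd x + b * snd y + c * snd z)"

lemma phi_lc: "phi d (lc a b c x y z) = a * phi d x + b * phi d y + c * phi d z"
  by (simp add: phi_def lc_def algebra_simps)

lemma sq_via_phi:
  assumes "d > 0" "d mod 4 = 2" "phi d z * phi d z = phi d a * phi d b + phi d n"
  shows "zs_is_square d (zs_add (zs_mult d a b) n)"
  unfolding zs_is_square_def
proof
  show "zs_mult d z z = zs_add (zs_mult d a b) n"
    using assms by (intro phi_inj[of d]) (auto simp: phi_mult phi_add)
qed

lemma phi_zero: "phi d (0,0) = 0" by (simp add: phi_def)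

lemma core:
  assumes d: "d > 0" "d mod 4 = 2"
  and h1: "phi d n = (phi d R)^2 - phi d t * phi d A"
  and h2: "(2 * phi d R + phi d t)^2 - (phi d Z)^2 = 3 * phi d n"
  and nz: "phi d t \<noteq> 0" "phi d A \<noteq> 0" "phi d A + 2 * phi d R + phi d t \<noteq> 0"
          "4 * phi d A + 4 * phi d R + phi d t \<noteq> 0"
  and ds: "phi d A \<noteq> phi d t" "phi d A + 2 * phi d R \<noteq> 0" "4 * phi d A + 4 * phi d R \<noteq> 0"
          "2 * phi d R + phi d t \<noteq> 0" "3 * phi d A + 4 * phi d R + phi d t \<noteq> 0"
          "3 * phi d A + 2 * phi d R \<noteq> 0"
  shows "D_quadruple d n {t, A, lc 1 2 1 A R t, lc 4 4 1 A R t}"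
proof -
  let ?A3 = "lc 1 2 1 A R t" and ?A4 = "lc 4 4 1 A R t"
  let ?p = "phi d"
  have p3: "?p ?A3 = ?p A + 2 * ?p R + ?p t" and p4: "?p ?A4 = 4 * ?p A + 4 * ?p R + ?p t"
    by (simp_all add: phi_lc)
  have ne: "t \<noteq> A" "t \<noteq> ?A3" "t \<noteq> ?A4" "A \<noteq> ?A3" "A \<noteq> ?A4" "?A3 \<noteq> ?A4"
    using ds p3 p4 by (auto dest: arg_cong[of _ _ ?p] simp: algebra_simps)
  have z: "(0,0) \<notin> {t, A, ?A3, ?A4}"
    using nz p3 p4 phi_zero[of d] by (auto simp del: prod.inject)
  have card: "card {t, A, ?A3, ?A4} = 4" using ne by auto
  have S: "zs_is_square d (zs_add (zs_mult d a b) n)" if "a \<in> {t, A, ?A3, ?A4}" "b \<in> {t, A, ?A3, ?A4}" "a \<noteq> b" for a b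
  proof -
    have key: "\<exists>z. ?p z * ?p z = ?p a * ?p b + ?p n"
    proof -
      have c1: "?p R * ?p R = ?p t * ?p A + ?p n" using h1 by (simp add: power2_eq_square)
      have c2: "?p (lc 1 1 0 R t t) * ?p (lc 1 1 0 R t t) = ?p t * ?p ?A3 + ?p n"
        using h1 by (simp add: phi_lc power2_eq_square algebra_simps)
      have c3: "?p (lc 1 1 0 A R R) * ?p (lc 1 1 0 A R R) = ?p A * ?p ?A3 + ?p n"
        using h1 by (simp add: phi_lc power2_eq_square algebra_simps)
      have c4: "?p Z * ?p Z = ?p t * ?p ?A4 + ?p n"
        using h1 h2 by (simp add: phi_lc power2_eq_square algebra_simps)
      have c5: "?p (lc 2 1 0 A R R) * ?p (lc 2 1 0 A R R) = ?p A * ?p ?A4 + ?p n"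
        using h1 by (simp add: phi_lc power2_eq_square algebra_simps)
      have c6: "?p (lc 2 3 1 A R t) * ?p (lc 2 3 1 A R t) = ?p ?A3 * ?p ?A4 + ?p n"
        using h1 by (simp add: phi_lc power2_eq_square algebra_simps)
      have e: "\<And>x y w. ?p w * ?p w = ?p x * ?p y + ?p n \<Longrightarrow> (\<exists>z. ?p z * ?p z = ?p x * ?p y + ?p n) \<and> (\<exists>z. ?p z * ?p z = ?p y * ?p x + ?p n)"
        by (metis mult.commute)
      note E = e[OF c1] e[OF c2] e[OF c3] e[OF c4] e[OF c5] e[OF c6]
      from that show ?thesis
        apply (simp only: insert_iff empty_iff simp_thms)
        using E by (elim disjE; (simp only:)?; blast)
    qed
    then obtain z where "?p z * ?p z = ?p a * ?p b + ?p n" by blast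
    thus ?thesis using sq_via_phi[OF d] by blast
  qed
  show ?thesis unfolding D_quadruple_def using card z S by blast
qed




lemma quad_fin: assumes "a \<noteq> 0 \<or> b \<noteq> 0" shows "finite {v::real. a*v^2 + b*v + c = 0}"
proof -
  have "[:c, b, a:] \<noteq> 0" using assms by auto
  hence "finite {v. poly [:c, b, a:] v = 0}" by (rule poly_roots_finite)
  moreover have "{v. poly [:c, b, a:] v = 0} = {v::real. a*v^2 + b*v + c = 0}"
    by (auto simp: algebra_simps power2_eq_square)
  ultimately show ?thesis by simp
qed

lemma inj_phi: "d > 0 \<Longrightarrow> d mod 4 = 2 \<Longrightarrow> inj (phi d)"
  by (auto intro: injI phi_inj)

lemma fin_pre:
  assumes "finite V" "ca \<noteq> 0" "inj (phi d)"
    and "\<And>e. e \<in> J \<Longrightarrow> phi d e > 0 \<and> phi d (Rf e) = ca * phi d e + cb / phi d e + cc"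
  shows "finite {e\<in>J. phi d (Rf e) \<in> V}"
proof -
  let ?W = "\<Union>v\<in>V. {x. ca*x^2 + (cc - v)*x + cb = 0}"
  have fW: "finite ?W" using assms(1,2) quad_fin by auto
  have "{e\<in>J. phi d (Rf e) \<in> V} \<subseteq> phi d -` ?W"
  proof
    fix e assume e: "e \<in> {e\<in>J. phi d (Rf e) \<in> V}"
    let ?x = "phi d e"
    have x: "?x > 0" "phi d (Rf e) = ca * ?x + cb / ?x + cc" using assms(4) e by auto
    have "ca*?x^2 + (cc - phi d (Rf e))*?x + cb = 0"
      using x by (simp add: field_simps power2_eq_square)
    thus "e \<in> phi d -` ?W" using e by auto
  qed
  moreover have "finite (phi d -` ?W)" using fW assms(3) by (simp add: finite_vimageI)
  ultimately show ?thesis by (rule finite_subset)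
qed

lemma family:
  assumes d: "d > 0" "d mod 4 = 2"
    and J: "infinite J"
    and ca: "ca \<noteq> 0"
    and t: "phi d t \<noteq> 0"
    and H: "\<And>e. e \<in> J \<Longrightarrow> phi d e > 0 \<and> phi d (Rf e) = ca * phi d e + cb / phi d e + cc
        \<and> phi d n = (phi d (Rf e))^2 - phi d t * phi d (Af e)
        \<and> (2 * phi d (Rf e) + phi d t)^2 - (phi d (Zf e))^2 = 3 * phi d n"
  shows "infinite {S. D_quadruple d n S}"
proof -
  let ?p = "phi d"
  let ?T = "?p t" and ?N = "?p n"
  define a where "a v = (v^2 - ?N) / ?T" for v
  define good where "good v \<longleftrightarrow> a v \<noteq> 0 \<and> a v + 2 * v + ?T \<noteq> 0 \<and> 4 * a v + 4 * v + ?T \<noteq> 0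
     \<and> a v \<noteq> ?T \<and> a v + 2 * v \<noteq> 0 \<and> 4 * a v + 4 * v \<noteq> 0 \<and> 2 * v + ?T \<noteq> 0
     \<and> 3 * a v + 4 * v + ?T \<noteq> 0 \<and> 3 * a v + 2 * v \<noteq> 0" for v
  have inj: "inj ?p" using inj_phi d by blast
  have Hp: "\<And>e. e \<in> J \<Longrightarrow> ?p e > 0 \<and> ?p (Rf e) = ca * ?p e + cb / ?p e + cc" using H by blast
  have B: "{v. \<not> good v} \<subseteq> {v. 1*v^2 + 0*v + (-?N) = 0} \<union> {v. 1*v^2 + (2*?T)*v + (?T^2 - ?N) = 0}
     \<union> {v. 4*v^2 + (4*?T)*v + (?T^2 - 4*?N) = 0} \<union> {v. 1*v^2 + 0*v + (-?N - ?T^2) = 0}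
     \<union> {v. 1*v^2 + (2*?T)*v + (-?N) = 0} \<union> {v. 4*v^2 + (4*?T)*v + (-4*?N) = 0}
     \<union> {v. 0*v^2 + 2*v + ?T = 0} \<union> {v. 3*v^2 + (4*?T)*v + (?T^2 - 3*?N) = 0}
     \<union> {v. 3*v^2 + (2*?T)*v + (-3*?N) = 0}"
    using t unfolding good_def a_def by (auto simp: field_simps power2_eq_square)
  have fB: "finite {v. \<not> good v}"
    by (rule finite_subset[OF B]) (intro finite_UnI quad_fin; simp)
  define Jg where "Jg = {e\<in>J. good (?p (Rf e))}"
  have "J - Jg = {e\<in>J. ?p (Rf e) \<in> {v. \<not> good v}}" unfolding Jg_def by auto
  hence "finite (J - Jg)" using fin_pre[OF fB ca inj Hp] by simp
  hence iJg: "infinite Jg"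
  proof -
    have "J \<subseteq> (J - Jg) \<union> Jg" by blast
    thus ?thesis using J \<open>finite (J - Jg)\<close> by (meson finite_Un finite_subset)
  qed
  define S where "S e = {t, Af e, lc 1 2 1 (Af e) (Rf e) t, lc 4 4 1 (Af e) (Rf e) t}" for e
  have aA: "?p (Af e) = a (?p (Rf e))" if "e \<in> J" for e
  proof -
    have h: "?N = (?p (Rf e))^2 - ?T * ?p (Af e)" using H[OF that] by blast
    show ?thesis unfolding a_def using t by (simp add: eq_divide_eq h algebra_simps)
  qed
  have DQ: "D_quadruple d n (S e)" if "e \<in> Jg" for e
  proof -
    have eJ: "e \<in> J" and g: "good (?p (Rf e))" using that unfolding Jg_def by auto
    show ?thesis unfolding S_def
      apply (rule core[OF d, where Z = "Zf e"])
      using H[OF eJ] t g aA[OF eJ] unfolding good_def by auto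
  qed
  have "infinite (S ` Jg)"
  proof
    assume fin: "finite (S ` Jg)"
    define F where "F = \<Union>(S ` Jg)"
    have fF: "finite F" unfolding F_def using fin by (rule finite_Union) (auto simp: S_def)
    define V where "V = (\<Union>y\<in>(\<lambda>z. ?N + ?T * ?p z) ` F. {sqrt y, - sqrt y})"
    have fV: "finite V" unfolding V_def using fF by auto
    have "Jg \<subseteq> {e\<in>J. ?p (Rf e) \<in> V}"
    proof
      fix e assume e: "e \<in> Jg"
      hence eJ: "e \<in> J" unfolding Jg_def by auto
      have AF: "Af e \<in> F" unfolding F_def S_def using e by blast
      have sq: "(?p (Rf e))^2 = ?N + ?T * ?p (Af e)" using H[OF eJ] by simp
      have "sqrt (?N + ?T * ?p (Af e)) = \<bar>?p (Rf e)\<bar>" using sq[symmetric] by simp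
      hence "?p (Rf e) = sqrt (?N + ?T * ?p (Af e)) \<or> ?p (Rf e) = - sqrt (?N + ?T * ?p (Af e))"
        by (auto simp: abs_real_def)
      thus "e \<in> {e\<in>J. ?p (Rf e) \<in> V}" unfolding V_def using AF eJ by blast
    qed
    hence "finite Jg" using fin_pre[OF fV ca inj Hp] finite_subset by blast
    thus False using iJg by simp
  qed
  moreover have "S ` Jg \<subseteq> {S. D_quadruple d n S}" using DQ by auto
  ultimately show ?thesis using finite_subset by blast
qed




definition cj :: "zsqrt \<Rightarrow> zsqrt" where "cj x = (fst x, - snd x)"

fun pw :: "int \<Rightarrow> zsqrt \<Rightarrow> nat \<Rightarrow> zsqrt" where
  "pw d u 0 = (1, 0)"
| "pw d u (Suc j) = zs_mult d u (pw d u j)"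

lemma pw_props:
  assumes "fst u mod 12 = 1" "snd u mod 12 = 0" "(fst u)^2 - d * (snd u)^2 = 1"
  shows "fst (pw d u j) mod 12 = 1 \<and> snd (pw d u j) mod 12 = 0 \<and> (fst (pw d u j))^2 - d * (snd (pw d u j))^2 = 1"
proof (induction j)
  case 0 then show ?case by simp
next
  case (Suc j)
  obtain a b where ab: "pw d u j = (a, b)" by force
  obtain p q where pq: "u = (p, q)" by force
  have h: "a mod 12 = 1" "b mod 12 = 0" "a^2 - d*b^2 = 1" using Suc ab by auto
  have h2: "p mod 12 = 1" "q mod 12 = 0" "p^2 - d*q^2 = 1" using assms pq by auto
  obtain a' b' p' q' where w: "a = 1 + 12*a'" "b = 12*b'" "p = 1 + 12*p'" "q = 12*q'"
    using h(1,2) h2(1,2) by (metis add.commute div_mult_mod_eq mult.commute add_0)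
  have "fst (pw d u (Suc j)) = p*a + d*q*b" "snd (pw d u (Suc j)) = p*b + q*a"
    using ab pq by (simp_all add: zs_mult_def)
  moreover have "p*a + d*q*b = 1 + 12*(a' + p' + 12*p'*a' + 12*d*q'*b')" using w by algebra
  moreover have "p*b + q*a = 12*(b' + 12*p'*b' + q' + 12*q'*a')" using w by algebra
  moreover have "(p*a + d*q*b)^2 - d*(p*b + q*a)^2 = (p^2 - d*q^2)*(a^2 - d*b^2)" by algebra
  moreover have "(1 + 12*(a' + p' + 12*p'*a' + 12*d*q'*b')) mod 12 = (1::int)" by presburger
  moreover have "(12*(b' + 12*p'*b' + q' + 12*q'*a')) mod 12 = (0::int)" by simp
  ultimately show ?case using h(3) h2(3) by simp
qed

lemma phi_pw: "d \<ge> 0 \<Longrightarrow> phi d (pw d u j) = (phi d u)^j"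
  by (induction j) (simp_all add: phi_mult, simp add: phi_def)

lemma phi_cj: assumes "d \<ge> 0" "(fst e)^2 - d * (snd e)^2 = 1"
  shows "phi d e * phi d (cj e) = 1"
proof -
  have "phi d e * phi d (cj e) = (fst e)^2 - d * (snd e)^2"
    using assms(1) by (simp add: phi_def cj_def algebra_simps power2_eq_square)
  also have "\<dots> = 1" using assms(2) by (metis of_int_1 of_int_diff of_int_mult of_int_power)
  finally show ?thesis .
qed

lemma GC:
  assumes d: "d > 0" "d mod 4 = 2"
    and U: "fst u mod 12 = 1" "snd u mod 12 = 0" "(fst u)^2 - d * (snd u)^2 = 1" "fst u > 0" "snd u > 0"
    and ab: "zs_mult d al be = (3*m, 3*k)"
    and ts: "zs_mult d t s = (6, 0)"
    and al: "phi d al \<noteq> 0" and t: "phi d t \<noteq> 0"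
    and Rb: "lc 2 1 0 Rb t t = zs_add al be"
    and Ab: "zs_mult d t Ab = zs_add (zs_mult d Rb Rb) (-4*m, -4*k)"
  shows "infinite {S. D_quadruple d (4*m, 4*k) S}"
proof -
  let ?p = "phi d"
  have d0: "d \<ge> 0" using d by simp
  define J where "J = range (pw d u)"
  have pu: "?p u > 1"
  proof -
    have "real_of_int (fst u) \<ge> 1" "real_of_int (snd u) \<ge> 1" using U by auto
    moreover have "sqrt (real_of_int d) > 0" using d by simp
    ultimately show ?thesis unfolding phi_def
      by (smt (verit) mult_le_cancel_right1)
  qed
  have iJ: "infinite J"
  proof -
    have "inj (\<lambda>j. (?p u)^j)" using pu by (auto intro!: injI simp: power_inject_exp)
    hence "inj (pw d u)" using phi_pw[OF d0] by (metis (mono_tags, lifting) inj_on_def)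
    thus ?thesis unfolding J_def by (simp add: range_inj_infinite)
  qed
  define a' where "a' e = (fst e - 1) div 12" for e :: zsqrt
  define b' where "b' e = snd e div 12" for e :: zsqrt
  define D where "D e = zs_add (zs_mult d al (a' e, b' e)) (zs_mult d be (a' e, - b' e))" for e
  define Rf where "Rf e = lc 1 6 0 Rb (D e) (D e)" for e
  define Af where "Af e = zs_add Ab (zs_mult d s (lc 2 6 0 (zs_mult d Rb (D e)) (zs_mult d (D e) (D e)) (D e)))" for e
  define Zf where "Zf e = lc 1 (-1) 0 (zs_mult d be (cj e)) (zs_mult d al e) e" for e
  have pn: "?p (4*m, 4*k) = 4 * ?p (m, k)" by (simp add: phi_def algebra_simps)
  have pab: "?p al * ?p be = 3 * ?p (m, k)"
  proof -
    have "?p (zs_mult d al be) = ?p (3*m, 3*k)" using ab by simp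
    moreover have "?p (3*m, 3*k) = 3 * ?p (m,k)" by (simp add: phi_def algebra_simps)
    ultimately show ?thesis by (simp add: phi_mult[OF d0])
  qed
  have pts: "?p t * ?p s = 6"
  proof -
    have "?p (zs_mult d t s) = ?p (6, 0)" using ts by simp
    moreover have "?p (6, 0) = 6" by (simp add: phi_def)
    ultimately show ?thesis by (simp add: phi_mult[OF d0])
  qed
  have pR1: "2 * ?p Rb + ?p t = ?p al + ?p be" using arg_cong[OF Rb, of ?p] by (simp add: phi_lc phi_add)
  have pA1: "?p t * ?p Ab = ?p Rb * ?p Rb - 4 * ?p (m, k)"
  proof -
    have "?p (zs_mult d t Ab) = ?p (zs_add (zs_mult d Rb Rb) (-4*m, -4*k))" using Ab by simp
    moreover have "?p (-4*m, -4*k) = - 4 * ?p (m,k)" by (simp add: phi_def algebra_simps)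
    ultimately show ?thesis by (simp add: phi_mult[OF d0] phi_add)
  qed
  show ?thesis
  proof (rule family[where ca = "?p al / 2" and cb = "?p be / 2" and cc = "- ?p t / 2"
        and Rf = Rf and Af = Af and Zf = Zf, OF d iJ _ t])
    show "?p al / 2 \<noteq> 0" using al by simp
  next
    fix e assume eJ: "e \<in> J"
    then obtain j where ej: "e = pw d u j" unfolding J_def by auto
    have E: "fst e mod 12 = 1" "snd e mod 12 = 0" "(fst e)^2 - d * (snd e)^2 = 1"
      using pw_props[OF U(1-3)] ej by auto
    have x0: "?p e > 0" using ej phi_pw[OF d0] pu by simp
    have xc: "?p e * ?p (cj e) = 1" using phi_cj[OF d0 E(3)] .
    have fe: "fst e = 1 + 12 * a' e" "snd e = 12 * b' e" unfolding a'_def b'_def using E(1,2) by presburger+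
    have pe: "?p e = 1 + 12 * ?p (a' e, b' e)" using fe by (simp add: phi_def algebra_simps)
    have pce: "?p (cj e) = 1 + 12 * ?p (a' e, - b' e)" using fe by (simp add: phi_def cj_def algebra_simps)
    have pD: "?p (D e) = ?p al * ?p (a' e, b' e) + ?p be * ?p (a' e, - b' e)"
      unfolding D_def by (simp add: phi_add phi_mult[OF d0])
    have pX: "?p al * ?p e + ?p be * ?p (cj e) = ?p al + ?p be + 12 * ?p (D e)"
      using pe pce pD by (simp add: algebra_simps)
    have pR: "?p (Rf e) = ?p Rb + 6 * ?p (D e)" unfolding Rf_def by (simp add: phi_lc)
    have ci: "?p (cj e) = 1 / ?p e" using xc x0 by (simp add: field_simps)
    have R: "?p (Rf e) = ?p al / 2 * ?p e + (?p be / 2) / ?p e + - ?p t / 2"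
      using pR pX pR1 ci by (simp add: field_simps)
    have pA: "?p (Af e) = ?p Ab + ?p s * (2 * (?p Rb * ?p (D e)) + 6 * (?p (D e) * ?p (D e)))"
      unfolding Af_def by (simp add: phi_add phi_mult[OF d0] phi_lc)
    have h1: "?p (4*m, 4*k) = (?p (Rf e))^2 - ?p t * ?p (Af e)"
    proof -
      have "?p t * ?p (Af e) = ?p t * ?p Ab + (?p t * ?p s) * (2 * (?p Rb * ?p (D e)) + 6 * (?p (D e) * ?p (D e)))"
        using pA by (simp add: algebra_simps)
      also have "\<dots> = ?p Rb * ?p Rb - 4 * ?p (m, k) + 6 * (2 * (?p Rb * ?p (D e)) + 6 * (?p (D e) * ?p (D e)))"
        using pA1 pts by simp
      finally have "?p t * ?p (Af e) = ?p Rb * ?p Rb - 4 * ?p (m, k) + 6 * (2 * (?p Rb * ?p (D e)) + 6 * (?p (D e) * ?p (D e)))" .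
      thus ?thesis using pR pn by (simp add: algebra_simps power2_eq_square)
    qed
    have pZ: "?p (Zf e) = ?p be * ?p (cj e) - ?p al * ?p e"
      unfolding Zf_def by (simp add: phi_lc phi_mult[OF d0])
    have h2: "(2 * ?p (Rf e) + ?p t)^2 - (?p (Zf e))^2 = 3 * ?p (4*m, 4*k)"
    proof -
      have X2: "2 * ?p (Rf e) + ?p t = ?p al * ?p e + ?p be * ?p (cj e)" using pR pX pR1 by simp
      have "(2 * ?p (Rf e) + ?p t)^2 - (?p (Zf e))^2 = 4 * (?p al * ?p be) * (?p e * ?p (cj e))"
        unfolding X2 pZ by (simp add: algebra_simps power2_eq_square)
      thus ?thesis using xc pab pn by simp
    qed
    show "?p e > 0 \<and> ?p (Rf e) = ?p al / 2 * ?p e + (?p be / 2) / ?p e + - ?p t / 2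
        \<and> ?p (4*m, 4*k) = (?p (Rf e))^2 - ?p t * ?p (Af e)
        \<and> (2 * ?p (Rf e) + ?p t)^2 - (?p (Zf e))^2 = 3 * ?p (4*m, 4*k)"
      using x0 R h1 h2 by blast
  qed
qed




lemma unit_div:
  assumes d: "d > 0" "d mod 4 = 2" and ti: "zs_mult d t ti = (1, 0)"
  shows "zs_mult d t (zs_mult d Y ti) = Y"
proof (rule phi_inj[OF d(2) _ d(1)])
  have d0: "d \<ge> 0" using d by simp
  have "phi d (zs_mult d t ti) = phi d (1, 0)" using ti by simp
  hence "phi d t * phi d ti = phi d (1, 0)" by (simp only: phi_mult[OF d0])
  hence "phi d t * phi d ti = 1" by (simp add: phi_def)
  thus "phi d (zs_mult d t (zs_mult d Y ti)) = phi d Y" by (simp add: phi_mult[OF d0] algebra_simps)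
qed

lemma C1a:
  assumes d: "d > 0" "d mod 4 = 2"
    and U: "fst u mod 12 = 1" "snd u mod 12 = 0" "(fst u)^2 - d * (snd u)^2 = 1" "fst u > 0" "snd u > 0"
    and mk: "even m" "even k"
  shows "infinite {S. D_quadruple d (4*m, 4*k) S}"
proof -
  define R1 where "R1 = (3*m div 2, 3*k div 2)"
  define Y where "Y = zs_add (zs_mult d R1 R1) (-4*m, -4*k)"
  show ?thesis
  proof (rule GC[OF d U, where al = "(1,0)" and be = "(3*m, 3*k)" and t = "(1,0)" and s = "(6,0)"
      and Rb = R1 and Ab = "zs_mult d Y (1,0)"])
    show "zs_mult d (1, 0) (3 * m, 3 * k) = (3 * m, 3 * k)" by (simp add: zs_mult_def)
    show "zs_mult d (1, 0) (6, 0) = (6, 0)" by (simp add: zs_mult_def)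
    show "phi d (1, 0) \<noteq> 0" by (simp add: phi_def)
    show "phi d (1, 0) \<noteq> 0" by (simp add: phi_def)
    show "lc 2 1 0 R1 (1, 0) (1, 0) = zs_add (1, 0) (3 * m, 3 * k)"
      using mk by (simp add: lc_def zs_add_def R1_def; presburger?)
    show "zs_mult d (1, 0) (zs_mult d Y (1, 0)) = zs_add (zs_mult d R1 R1) (- 4 * m, - 4 * k)"
      unfolding Y_def by (rule unit_div[OF d]) (simp add: zs_mult_def)
  qed
qed

lemma C1b:
  assumes d: "d > 0" "d mod 4 = 2"
    and U: "fst u mod 12 = 1" "snd u mod 12 = 0" "(fst u)^2 - d * (snd u)^2 = 1" "fst u > 0" "snd u > 0"
    and e: "x^2 - d * y^2 = -1" "odd x" "odd y"
    and mk: "even m" "odd k"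
  shows "infinite {S. D_quadruple d (4*m, 4*k) S}"
proof -
  define R1 where "R1 = ((1 + 3*m - x) div 2, (3*k - y) div 2)"
  define Y where "Y = zs_add (zs_mult d R1 R1) (-4*m, -4*k)"
  show ?thesis
  proof (rule GC[OF d U, where al = "(1,0)" and be = "(3*m, 3*k)" and t = "(x,y)" and s = "(-6*x, 6*y)"
      and Rb = R1 and Ab = "zs_mult d Y (-x, y)"])
    show "zs_mult d (1, 0) (3 * m, 3 * k) = (3 * m, 3 * k)" by (simp add: zs_mult_def)
    have "x * (-6*x) + d * y * (6*y) = 6" using e(1) by algebra
    thus "zs_mult d (x, y) (-6*x, 6*y) = (6, 0)" by (simp add: zs_mult_def algebra_simps)
    show "phi d (1, 0) \<noteq> 0" by (simp add: phi_def)
    show "phi d (x, y) \<noteq> 0"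
    proof
      assume "phi d (x, y) = 0"
      hence "phi d (x, y) = phi d (0, 0)" using phi_zero by simp
      hence "(x, y) = (0, 0)" by (rule phi_inj[OF d(2) _ d(1)])
      thus False using e(2) by simp
    qed
    show "lc 2 1 0 R1 (x, y) (x, y) = zs_add (1, 0) (3 * m, 3 * k)"
      using mk e(2,3) by (simp add: lc_def zs_add_def R1_def; presburger?)
    have "x * (-x) + d * y * y = 1" using e(1) by algebra
    hence "zs_mult d (x, y) (-x, y) = (1, 0)" by (simp add: zs_mult_def algebra_simps)
    thus "zs_mult d (x, y) (zs_mult d Y (-x, y)) = zs_add (zs_mult d R1 R1) (- 4 * m, - 4 * k)"
      unfolding Y_def by (rule unit_div[OF d])
  qed
qed

lemma two_div: "even (fst Y) \<Longrightarrow> even (snd Y) \<Longrightarrow> zs_mult d (2,0) (fst Y div 2, snd Y div 2) = Y"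
  by (simp add: zs_mult_def prod_eq_iff)

lemma Y_even:
  assumes "even (fst R)" "even d"
  shows "even (fst (zs_add (zs_mult d R R) (-4*m, -4*k))) \<and> even (snd (zs_add (zs_mult d R R) (-4*m, -4*k)))"
  using assms by (simp add: zs_add_def zs_mult_def)

lemma C2a:
  assumes d: "d > 0" "d mod 4 = 2"
    and U: "fst u mod 12 = 1" "snd u mod 12 = 0" "(fst u)^2 - d * (snd u)^2 = 1" "fst u > 0" "snd u > 0"
    and mk: "m mod 4 = 3" "even k"
  shows "infinite {S. D_quadruple d (4*m, 4*k) S}"
proof -
  define R1 where "R1 = ((3*m - 1) div 2, 3*k div 2)"
  define Y where "Y = zs_add (zs_mult d R1 R1) (-4*m, -4*k)"
  have ev1: "even (fst R1)" using mk unfolding R1_def by simp presburger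
  have ev2: "even d" using d(2) by presburger
  note ev = ev1 ev2
  show ?thesis
  proof (rule GC[OF d U, where al = "(1,0)" and be = "(3*m, 3*k)" and t = "(2,0)" and s = "(3,0)"
      and Rb = R1 and Ab = "(fst Y div 2, snd Y div 2)"])
    show "zs_mult d (1, 0) (3 * m, 3 * k) = (3 * m, 3 * k)" by (simp add: zs_mult_def)
    show "zs_mult d (2, 0) (3, 0) = (6, 0)" by (simp add: zs_mult_def)
    show "phi d (1, 0) \<noteq> 0" by (simp add: phi_def)
    show "phi d (2, 0) \<noteq> 0" by (simp add: phi_def)
    show "lc 2 1 0 R1 (2, 0) (2, 0) = zs_add (1, 0) (3 * m, 3 * k)"
      using mk by (simp add: lc_def zs_add_def R1_def; presburger?)
    show "zs_mult d (2, 0) (fst Y div 2, snd Y div 2) = zs_add (zs_mult d R1 R1) (- 4 * m, - 4 * k)"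
      unfolding Y_def using Y_even[OF ev] by (intro two_div) auto
  qed
qed

lemma C2b:
  assumes d: "d > 0" "d mod 4 = 2"
    and U: "fst u mod 12 = 1" "snd u mod 12 = 0" "(fst u)^2 - d * (snd u)^2 = 1" "fst u > 0" "snd u > 0"
    and e: "x^2 - d * y^2 = -1" "odd x" "odd y"
    and mk: "m mod 4 = 1" "even k"
  shows "infinite {S. D_quadruple d (4*m, 4*k) S}"
proof -
  define X1 where "X1 = x - 3*m*x + 3*k*d*y"
  define X2 where "X2 = y - 3*k*x + 3*m*y"
  define R1 where "R1 = ((X1 - 2) div 2, X2 div 2)"
  define Y where "Y = zs_add (zs_mult d R1 R1) (-4*m, -4*k)"
  obtain i j ee f where w: "m = 4*i + 1" "k = 2*j" "d = 4*ee + 2" "x = 2*f + 1"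
    using mk d(2) e(2) by (metis oddE evenE div_mult_mod_eq add.commute mult.commute)
  have X1e: "X1 - 2 = 4 * (- f - 6*f*i - 3*i + 6*j*ee*y + 3*j*y - 1)"
    unfolding X1_def w by algebra
  have X2e: "even X2" unfolding X2_def using mk e(2,3) by (simp add: w)
  have ev: "even (fst R1)" "even d" using X1e d unfolding R1_def by (simp, presburger)+
  show ?thesis
  proof (rule GC[OF d U, where al = "(x,y)" and be = "(-3*m*x + 3*k*d*y, -3*k*x + 3*m*y)"
      and t = "(2,0)" and s = "(3,0)" and Rb = R1 and Ab = "(fst Y div 2, snd Y div 2)"])
    have "x * (-3*m*x + 3*k*d*y) + d * y * (-3*k*x + 3*m*y) = 3*m" using e(1)
      by (simp add: algebra_simps) algebra
    moreover have "x * (-3*k*x + 3*m*y) + y * (-3*m*x + 3*k*d*y) = 3*k" using e(1)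
      by (simp add: algebra_simps) algebra
    ultimately show "zs_mult d (x, y) (-3*m*x + 3*k*d*y, -3*k*x + 3*m*y) = (3 * m, 3 * k)"
      by (simp add: zs_mult_def)
    show "zs_mult d (2, 0) (3, 0) = (6, 0)" by (simp add: zs_mult_def)
    show "phi d (x, y) \<noteq> 0"
    proof
      assume "phi d (x, y) = 0"
      hence "phi d (x, y) = phi d (0, 0)" using phi_zero by simp
      hence "(x, y) = (0, 0)" by (rule phi_inj[OF d(2) _ d(1)])
      thus False using e(2) by simp
    qed
    show "phi d (2, 0) \<noteq> 0" by (simp add: phi_def)
    have "2 * ((X1 - 2) div 2) = X1 - 2" "2 * (X2 div 2) = X2" using X1e X2e by presburger+
    thus "lc 2 1 0 R1 (2, 0) (2, 0) = zs_add (x, y) (-3*m*x + 3*k*d*y, -3*k*x + 3*m*y)"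
      by (simp add: lc_def zs_add_def R1_def X1_def X2_def)
    show "zs_mult d (2, 0) (fst Y div 2, snd Y div 2) = zs_add (zs_mult d R1 R1) (- 4 * m, - 4 * k)"
      unfolding Y_def using Y_even[OF ev] by (intro two_div) auto
  qed
qed

lemma mod3_aux:
  fixes u v i :: int
  assumes "v = 2*u - 3 + 3*i" "v mod 3 = 0 \<or> v mod 3 = 1"
  shows "3 dvd (u^2 - 8*u)"
proof -
  have "u mod 3 = 0 \<or> u mod 3 = 2" using assms by presburger
  then obtain q where "u = 3*q \<or> u = 3*q + 2" by (metis div_mult_mod_eq add.commute mult.commute add_0)
  thus ?thesis
  proof
    assume "u = 3*q" hence "u^2 - 8*u = 3*(3*q^2 - 8*q)" by algebra
    thus ?thesis by simp
  next
    assume "u = 3*q + 2" hence "u^2 - 8*u = 3*(3*q^2 - 4*q - 4)" by algebra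
    thus ?thesis by simp
  qed
qed

lemma C3:
  assumes d: "d > 0" "d mod 4 = 2"
    and U: "fst u mod 12 = 1" "snd u mod 12 = 0" "(fst u)^2 - d * (snd u)^2 = 1" "fst u > 0" "snd u > 0"
    and t: "ta^2 - d*tb^2 = 6*sg" "sg = 1 \<or> sg = -1" "even ta" "odd tb"
    and c: "(ta + c*tb) mod 3 = 0" "(c^2 - d) mod 3 = 0"
    and v: "(m + c*k) mod 3 = 0 \<or> (m + c*k) mod 3 = 1"
    and m4: "(m - ta - 1) mod 4 = 0"
    and mk: "odd m" "odd k"
  shows "infinite {S. D_quadruple d (4*m, 4*k) S}"
proof -
  define R1 where "R1 = ((3 + m - ta) div 2, (k - tb) div 2)"
  define a where "a = fst R1"
  define b where "b = snd R1"
  have a2: "2*a = 3 + m - ta" "2*b = k - tb" unfolding a_def b_def R1_def using mk t(3,4) by simp_all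
  define Y where "Y = zs_add (zs_mult d R1 R1) (-4*m, -4*k)"
  define Y1 where "Y1 = fst Y"
  define Y2 where "Y2 = snd Y"
  have Ye: "Y1 = a^2 + d*b^2 - 4*m" "Y2 = 2*a*b - 4*k"
    unfolding Y1_def Y2_def Y_def a_def b_def by (simp_all add: zs_add_def zs_mult_def power2_eq_square)
  have evd: "even d" using d(2) by presburger
  have eva: "even a" using a2(1) m4 by presburger
  have evY1: "even Y1" using eva evd Ye(1) by simp
  have "3 dvd (ta + c*tb)" using c(1) by (simp add: mod_eq_0_iff_dvd)
  then obtain i where i0: "ta + c*tb = 3*i" unfolding dvd_def by blast
  hence i: "ta = - c*tb + 3*i" by (simp add: algebra_simps)
  have "3 dvd (c^2 - d)" using c(2) by (simp add: mod_eq_0_iff_dvd)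
  then obtain j0 where j0: "c^2 - d = 3*j0" unfolding dvd_def by blast
  define j where "j = - j0"
  have j: "d = c^2 + 3*j" using j0 unfolding j_def by (simp add: algebra_simps)
  have psi: "3 dvd (Y1 + c*Y2)"
  proof -
    define uu where "uu = a + c*b"
    define vv where "vv = m + c*k"
    have vdef: "vv = 2*uu - 3 + 3*i" unfolding uu_def vv_def using a2 i by algebra
    have "3 dvd (uu^2 - 8*uu)" using mod3_aux[OF vdef] v unfolding vv_def by blast
    then obtain z where z: "uu^2 - 8*uu = 3*z" by blast
    have "Y1 + c*Y2 = (uu^2 - 8*uu) + 3*(j*b^2 + 4 - 4*i)"
      unfolding Ye uu_def using vdef[unfolded uu_def vv_def] j by algebra
    thus ?thesis using z by simp
  qed
  then obtain l where l0: "Y1 + c*Y2 = 3*l" unfolding dvd_def by blast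
  hence l: "Y1 = - c*Y2 + 3*l" by (simp add: algebra_simps)
  define P where "P = Y1*ta - d*Y2*tb"
  define Q where "Q = Y2*ta - Y1*tb"
  have P3: "P = 3*(-c*Y2*i - l*c*tb + 3*l*i - j*Y2*tb)" unfolding P_def using l i j by algebra
  have Q3: "Q = 3*(Y2*i - l*tb)" unfolding Q_def using l i by algebra
  have P2: "even P" unfolding P_def using t(3) evd by simp
  have Q2: "even Q" unfolding Q_def using t(3) evY1 by simp
  have "6 dvd P" using P3 P2 by presburger
  then obtain P' where P': "P = 6*P'" by blast
  have "6 dvd Q" using Q3 Q2 by presburger
  then obtain Q' where Q': "Q = 6*Q'" by blast
  have sg2: "sg * sg = 1" using t(2) by auto
  show ?thesis
  proof (rule GC[OF d U, where al = "(3,0)" and be = "(m, k)" and t = "(ta,tb)" and s = "(sg*ta, -sg*tb)"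
      and Rb = R1 and Ab = "(sg*P', sg*Q')"])
    show "zs_mult d (3, 0) (m, k) = (3 * m, 3 * k)" by (simp add: zs_mult_def)
    have "ta * (sg*ta) + d * tb * (-sg*tb) = sg * (6*sg)" using t(1) by algebra
    thus "zs_mult d (ta, tb) (sg*ta, -sg*tb) = (6, 0)" using sg2 by (simp add: zs_mult_def algebra_simps)
    show "phi d (3, 0) \<noteq> 0" by (simp add: phi_def)
    show "phi d (ta, tb) \<noteq> 0"
    proof
      assume "phi d (ta, tb) = 0"
      hence "phi d (ta, tb) = phi d (0, 0)" using phi_zero by simp
      hence "(ta, tb) = (0, 0)" by (rule phi_inj[OF d(2) _ d(1)])
      thus False using t(4) by simp
    qed
    show "lc 2 1 0 R1 (ta, tb) (ta, tb) = zs_add (3, 0) (m, k)"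
      using a2 unfolding a_def b_def by (simp add: lc_def zs_add_def prod_eq_iff)
    have e1: "6 * (ta * P' + d * tb * Q') = 6 * (sg * Y1)"
    proof -
      have "6 * (ta * P' + d * tb * Q') = ta * P + d * tb * Q" using P' Q' by algebra
      also have "\<dots> = Y1 * (ta^2 - d*tb^2)" unfolding P_def Q_def by algebra
      finally show ?thesis using t(1) by simp
    qed
    have e2: "6 * (ta * Q' + tb * P') = 6 * (sg * Y2)"
    proof -
      have "6 * (ta * Q' + tb * P') = ta * Q + tb * P" using P' Q' by algebra
      also have "\<dots> = Y2 * (ta^2 - d*tb^2)" unfolding P_def Q_def by algebra
      finally show ?thesis using t(1) by simp
    qed
    have f1: "ta * (sg*P') + d * tb * (sg*Q') = Y1"
    proof -
      have "ta * P' + d * tb * Q' = sg * Y1" using e1 by simp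
      hence "sg * (ta * P' + d * tb * Q') = (sg*sg) * Y1" by simp
      thus ?thesis using sg2 by (simp add: algebra_simps)
    qed
    have f2: "ta * (sg*Q') + tb * (sg*P') = Y2"
    proof -
      have "ta * Q' + tb * P' = sg * Y2" using e2 by simp
      hence "sg * (ta * Q' + tb * P') = (sg*sg) * Y2" by simp
      thus ?thesis using sg2 by (simp add: algebra_simps)
    qed
    show "zs_mult d (ta, tb) (sg*P', sg*Q') = zs_add (zs_mult d R1 R1) (- 4 * m, - 4 * k)"
      using f1 f2 unfolding Y_def[symmetric] Y1_def Y2_def by (simp add: zs_mult_def prod_eq_iff)
  qed
qed




lemma sq_mod3: "(x::int)^2 mod 3 = (if x mod 3 = 0 then 0 else 1)"
proof -
  have "x^2 mod 3 = (x mod 3)^2 mod 3" by (simp add: power_mod)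
  moreover have "x mod 3 = 0 \<or> x mod 3 = 1 \<or> x mod 3 = 2" by auto
  ultimately show ?thesis by auto
qed

lemma odd_sq4: "odd (x::int) \<Longrightarrow> \<exists>q. x^2 = 4*q + 1"
proof -
  assume "odd x" then obtain a where "x = 2*a + 1" by (metis oddE)
  hence "x^2 = 4*(a^2 + a) + 1" by algebra
  thus ?thesis by blast
qed

lemma even_sq4: "even (x::int) \<Longrightarrow> \<exists>q. x^2 = 4*q"
proof -
  assume "even x" then obtain a where "x = 2*a" by (metis evenE)
  hence "x^2 = 4*(a^2)" by algebra
  thus ?thesis by blast
qed

lemma C3':
  assumes d: "d > 0" "d mod 4 = 2"
    and U: "fst u mod 12 = 1" "snd u mod 12 = 0" "(fst u)^2 - d * (snd u)^2 = 1" "fst u > 0" "snd u > 0"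
    and e: "x^2 - d * y^2 = -1" "odd x" "odd y"
    and mu: "x1^2 - d * y1^2 = 6" "even x1" "odd y1" "y1^2 mod 3 = 1"
    and v: "(m - x1*y1*k) mod 3 = 0 \<or> (m - x1*y1*k) mod 3 = 1"
    and mk: "odd m" "odd k"
  shows "infinite {S. D_quadruple d (4*m, 4*k) S}"
proof -
  define c where "c = - x1*y1"
  have "3 dvd (y1^2 - 1)" using mu(4) by presburger
  then obtain r where r: "y1^2 = 1 + 3*r" unfolding dvd_def by (metis diff_add_cancel add.commute)
  have c1: "(x1 + c*y1) mod 3 = 0"
  proof -
    have "x1 + c*y1 = 3 * (- r*x1)" unfolding c_def using r by algebra
    thus ?thesis by simp
  qed
  have c2: "(c^2 - d) mod 3 = 0"
  proof -
    have x1s: "x1^2 = 6 + d*y1^2" using mu(1) by simp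
    have "c^2 = x1^2 * y1^2" unfolding c_def by (simp add: power_mult_distrib)
    hence "c^2 = (6 + d*y1^2) * y1^2" using x1s by simp
    hence "c^2 - d = 3 * (2*y1^2 + d*(2*r + 3*r^2))" using r by algebra
    thus ?thesis by simp
  qed
  have vv: "(m + c*k) mod 3 = 0 \<or> (m + c*k) mod 3 = 1" using v unfolding c_def by (simp add: algebra_simps)
  have evd: "even d" using d(2) by presburger
  show ?thesis
  proof (cases "(m - x1 - 1) mod 4 = 0")
    case True
    show ?thesis
      by (rule C3[OF d U, where ta = x1 and tb = y1 and sg = 1 and c = c]) (use mu c1 c2 vv True mk in auto)
  next
    case False
    define t1 where "t1 = x1*x + d*y1*y"
    define t2 where "t2 = x1*y + y1*x"
    have n: "t1^2 - d*t2^2 = 6 * (-1)"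
    proof -
      have "t1^2 - d*t2^2 = (x1^2 - d*y1^2) * (x^2 - d*y^2)" unfolding t1_def t2_def by algebra
      thus ?thesis using mu(1) e(1) by simp
    qed
    have pt1: "even t1" unfolding t1_def using mu(2) evd by simp
    have pt2: "odd t2" unfolding t2_def using mu(2,3) e(2) by simp
    have cc1: "(t1 + c*t2) mod 3 = 0"
    proof -
      have "t1 + c*t2 = x*(x1 + c*y1) + y*(d*y1 + c*x1)" unfolding t1_def t2_def by algebra
      also have "\<dots> = 3 * (- (r*x1*x) - y1*y*(2 + d*r))" unfolding c_def using r mu(1) by algebra
      finally show ?thesis by simp
    qed
    obtain a where wa: "x1 = 2*a" using mu(2) by (rule evenE)
    obtain b where wb: "x = 2*b + 1" using e(2) by (rule oddE)
    define ee where "ee = d div 4"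
    have we: "d = 4*ee + 2" unfolding ee_def using d(2) by presburger
    have "odd (y1*y)" using mu(3) e(3) by simp
    then obtain f where wf: "y1*y = 2*f + 1" by (rule oddE)
    note w = wa wb we wf
    have "t1 - x1 - 2 = 4*(a*b + 2*ee*f + ee + f)"
    proof -
      have "t1 - x1 - 2 = x1*(x - 1) + d*(y1*y) - 2" unfolding t1_def by algebra
      thus ?thesis unfolding w by algebra
    qed
    hence m4: "(m - t1 - 1) mod 4 = 0" using False mk(1) mu(2) by presburger
    show ?thesis
      by (rule C3[OF d U, where ta = t1 and tb = t2 and sg = "-1" and c = c]) (use n pt1 pt2 cc1 c2 vv m4 mk in auto)
  qed
qed




lemma no4: "4 * (z::int) \<noteq> -2" by presburger
lemma no9: "9 * (z::int) \<noteq> 6" by presburger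
lemma L1: "(A::int) = B - 1 \<Longrightarrow> A mod 3 = (B mod 3 - 1) mod 3" by presburger
lemma L2: "(A::int) = 6 + B \<Longrightarrow> A mod 3 = B mod 3" by presburger
lemma L3: "(A::int) = 1 + 12*Z \<Longrightarrow> A mod 12 = 1" by presburger

lemma mod3_prod_nz: "(a::int) mod 3 \<noteq> 0 \<Longrightarrow> b mod 3 \<noteq> 0 \<Longrightarrow> (a*b) mod 3 \<noteq> 0"
proof -
  assume a: "a mod 3 \<noteq> 0" and b: "b mod 3 \<noteq> 0"
  have "(a*b) mod 3 = ((a mod 3) * (b mod 3)) mod 3" by (simp add: mod_mult_eq)
  moreover have "a mod 3 = 1 \<or> a mod 3 = 2" "b mod 3 = 1 \<or> b mod 3 = 2" using a b by auto
  ultimately show ?thesis by auto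
qed

theorem theorem1p2:
  fixes d m k :: int
  assumes "d > 0" and "squarefree d" and "d mod 4 = 2"
    and "\<exists>x y :: int. x^2 - d * y^2 = -1"
    and "\<exists>x y :: int. x^2 - d * y^2 = 6"
    and "\<not> (m mod 6 = 5 \<and> k mod 6 = 3)"
  shows "infinite {S. D_quadruple d (4 * m, 4 * k) S}"
proof -
  note d = assms(1) assms(3)
  obtain x y :: int where e: "x^2 - d * y^2 = -1" using assms(4) by blast
  obtain x1 y1 :: int where mu: "x1^2 - d * y1^2 = 6" using assms(5) by blast
  have evd: "even d" using assms(3) by presburger
  have xs: "x^2 = d*y^2 - 1" using e by simp
  have ox: "odd x"
  proof -
    have "odd (d*y^2 - 1)" using evd by simp
    hence "odd (x^2)" using xs by simp
    thus ?thesis by simp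
  qed
  have oy: "odd y"
  proof
    assume "even y"
    then obtain y' where y': "y = 2*y'" by (rule evenE)
    obtain q where q: "x^2 = 4*q + 1" using odd_sq4[OF ox] by blast
    have "y^2 = 4*y'^2" using y' by (simp add: power_mult_distrib)
    hence "4*q + 1 = d*(4*y'^2) - 1" using xs q by simp
    hence "4 * (q - d*y'^2) = -2" by (simp add: algebra_simps)
    thus False using no4 by blast
  qed
  have x1s: "x1^2 = 6 + d*y1^2" using mu by simp
  have ex1: "even x1"
  proof -
    have "even (6 + d*y1^2)" using evd by simp
    hence "even (x1^2)" using x1s by simp
    thus ?thesis by simp
  qed
  have oy1: "odd y1"
  proof
    assume "even y1"
    then obtain y' where y': "y1 = 2*y'" by (rule evenE)
    obtain q where q: "x1^2 = 4*q" using even_sq4[OF ex1] by blast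
    have "y1^2 = 4*y'^2" using y' by (simp add: power_mult_distrib)
    hence "4*q = 6 + d*(4*y'^2)" using x1s q by simp
    hence "4 * (q - d*y'^2 - 2) = -2" by (simp add: algebra_simps)
    thus False using no4 by blast
  qed
  have no33: False if "x1 mod 3 = 0" "y1 mod 3 = 0"
  proof -
    have "3 dvd x1" "3 dvd y1" using that by (simp_all add: mod_eq_0_iff_dvd)
    then obtain a b where a: "x1 = 3*a" and b: "y1 = 3*b" by (auto elim!: dvdE)
    have "x1^2 = 9*a^2" "y1^2 = 9*b^2" using a b by (simp_all add: power_mult_distrib)
    hence "9*a^2 - d*(9*b^2) = 6" using mu by simp
    hence "9 * (a^2 - d*b^2) = 6" by (simp add: algebra_simps)
    thus False using no9 by blast
  qed
  have dm: "(d*z) mod 3 = ((d mod 3) * (z mod 3)) mod 3" for z by (simp add: mod_mult_eq)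
  have d3: "d mod 3 = 1"
  proof -
    have "d mod 3 = 0 \<or> d mod 3 = 1 \<or> d mod 3 = 2" by auto
    moreover have "d mod 3 \<noteq> 0"
    proof
      assume h: "d mod 3 = 0"
      have "(d*y^2) mod 3 = 0" using dm[of "y^2"] h by simp
      hence "(x^2) mod 3 = 2" using L1[OF xs] by simp
      thus False using sq_mod3[of x] by (simp split: if_splits)
    qed
    moreover have "d mod 3 \<noteq> 2"
    proof
      assume h: "d mod 3 = 2"
      have A: "(d*y1^2) mod 3 = (2 * (y1^2 mod 3)) mod 3" using dm[of "y1^2"] h by simp
      have B: "y1^2 mod 3 = (if y1 mod 3 = 0 then 0 else 1)" by (rule sq_mod3)
      have C: "x1^2 mod 3 = (if x1 mod 3 = 0 then 0 else 1)" by (rule sq_mod3)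
      have "x1^2 mod 3 = (d*y1^2) mod 3" using L2[OF x1s] .
      hence "x1 mod 3 = 0 \<and> y1 mod 3 = 0" using A B C by (simp split: if_splits)
      thus False by (auto intro: no33)
    qed
    ultimately show ?thesis by blast
  qed
  have x3: "x mod 3 = 0"
  proof -
    have "(d*y^2) mod 3 = (y^2) mod 3" using dm[of "y^2"] d3 by simp
    hence "(x^2) mod 3 = (y^2 mod 3 - 1) mod 3" using L1[OF xs] by simp
    thus ?thesis using sq_mod3[of x] sq_mod3[of y] by (simp split: if_splits)
  qed
  have y13: "y1 mod 3 \<noteq> 0"
  proof
    assume h: "y1 mod 3 = 0"
    have "(d*y1^2) mod 3 = 0" using dm[of "y1^2"] h sq_mod3[of y1] by simp
    hence "(x1^2) mod 3 = 0" using L2[OF x1s] by simp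
    hence "x1 mod 3 = 0" using sq_mod3[of x1] by (simp split: if_splits)
    thus False by (rule no33[OF _ h])
  qed
  have x13: "x1 mod 3 \<noteq> 0"
  proof
    assume h: "x1 mod 3 = 0"
    have "(x1^2) mod 3 = 0" using sq_mod3[of x1] h by simp
    moreover have "(d*y1^2) mod 3 = 1" using dm[of "y1^2"] d3 sq_mod3[of y1] y13 by simp
    ultimately show False using L2[OF x1s] by simp
  qed
  have y1s: "y1^2 mod 3 = 1" using sq_mod3[of y1] y13 by simp
  define X where "X = \<bar>x\<bar>"
  define Yy where "Yy = \<bar>y\<bar>"
  have X0: "X > 0" "Yy > 0" using ox oy unfolding X_def Yy_def by auto
  have XY: "X^2 - d*Yy^2 = -1" using e unfolding X_def Yy_def by simp
  have "3 dvd X" using x3 unfolding X_def by (simp add: mod_eq_0_iff_dvd)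
  then obtain X' where X': "X = 3*X'" by blast
  define p where "p = X^2 + d*Yy^2"
  define q where "q = 2*X*Yy"
  have pq: "p^2 - d*q^2 = 1"
  proof -
    have "p^2 - d*q^2 = (X^2 - d*Yy^2)^2" unfolding p_def q_def by algebra
    thus ?thesis using XY by simp
  qed
  define u where "u = (p^2 + d*q^2, 2*p*q)"
  have p0: "p > 0" unfolding p_def using X0 d(1) by (simp add: add_pos_nonneg)
  have q0: "q > 0" unfolding q_def using X0 by simp
  have U1: "fst u mod 12 = 1"
  proof -
    have f1: "fst u = 1 + 2*d*q^2" unfolding u_def using pq by simp
    have "q^2 = 36 * (X'^2*Yy^2)" unfolding q_def X' by (simp add: power_mult_distrib)
    hence "fst u = 1 + 12 * (6*d*(X'^2*Yy^2))" using f1 by simp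
    thus ?thesis by (rule L3)
  qed
  have U2: "snd u mod 12 = 0"
  proof -
    have "snd u = 12 * (p*X'*Yy)" unfolding u_def q_def X' by simp
    thus ?thesis by simp
  qed
  have U3: "(fst u)^2 - d * (snd u)^2 = 1"
  proof -
    have "(p^2 + d*q^2)^2 - d*(2*p*q)^2 = (p^2 - d*q^2)^2" by algebra
    hence "(fst u)^2 - d * (snd u)^2 = (p^2 - d*q^2)^2" unfolding u_def by simp
    thus ?thesis using pq by simp
  qed
  have U4: "fst u > 0" "snd u > 0" unfolding u_def using p0 q0 d(1) by (simp_all add: add_pos_nonneg)
  note U = U1 U2 U3 U4
  show ?thesis
  proof (cases "even m")
    case True
    show ?thesis
    proof (cases "even k")
      case True
      show ?thesis by (rule C1a[OF d U \<open>even m\<close> True])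
    next
      case False
      show ?thesis by (rule C1b[OF d U e ox oy \<open>even m\<close> False])
    qed
  next
    case False
    hence om: "odd m" .
    show ?thesis
    proof (cases "even k")
      case True
      have "m mod 4 = 3 \<or> m mod 4 = 1" using om by presburger
      thus ?thesis
      proof
        assume "m mod 4 = 3" thus ?thesis by (rule C2a[OF d U _ True])
      next
        assume "m mod 4 = 1" thus ?thesis by (rule C2b[OF d U e ox oy _ True])
      qed
    next
      case False
      hence ok: "odd k" .
      show ?thesis
      proof (cases "(m - x1*y1*k) mod 3 = 0 \<or> (m - x1*y1*k) mod 3 = 1")
        case True
        show ?thesis by (rule C3'[OF d U e ox oy mu ex1 oy1 y1s True om ok])
      next
        case False
        have alt: "(m - x1*(-y1)*k) mod 3 = 0 \<or> (m - x1*(-y1)*k) mod 3 = 1"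
        proof (rule ccontr)
          assume A: "\<not> ?thesis"
          define P where "P = x1*y1*k"
          have h1: "(m - P) mod 3 = 2" "(m + P) mod 3 = 2" using A False unfolding P_def by auto
          hence "m mod 3 = 2" "P mod 3 = 0" by presburger+
          have "(x1*y1) mod 3 \<noteq> 0" using mod3_prod_nz[OF x13 y13] .
          hence "k mod 3 = 0" using \<open>P mod 3 = 0\<close> mod3_prod_nz[of "x1*y1" k] unfolding P_def by auto
          hence "m mod 6 = 5 \<and> k mod 6 = 3" using \<open>m mod 3 = 2\<close> om ok by presburger
          thus False using assms(6) by blast
        qed
        have mu': "x1^2 - d * (-y1)^2 = 6" using mu by simp
        have y1s': "(-y1)^2 mod 3 = 1" using y1s by simp
        show ?thesis by (rule C3'[OF d U e ox oy mu' ex1 _ y1s' alt om ok]) (use oy1 in simp)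
      qed
    qed
  qed
qed


end
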